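(* Consider the iterates of the AdaSMSAG method described in the context, and let $x^*$ be an optimal solution of $\min_{x\in X}\psi(x)$. Suppose that, for a given $k\ge1$, $\alpha_k\beta_k-\theta_k\le 0$ and $\beta_k-L_k>0$, where $L_k:=L_f+L/\mu_k$. Then $$\Gamma_k\le\alpha_k\theta_k\left(D_{k-1}^2-D_k^2\right)+\frac{\|\delta_k\|^2}{2(\beta_k-L_k)}+\alpha_k\langle\delta_k,\;x^*-z_{k-1}\rangle.$$
   Context: Setting: $X\subseteq\mathbb{R}^n$ is a nonempty closed convex set; $\psi=f+h$ where $f(x)=E[F(x,\xi)]$, $h(x)=E[H(x,\xi)]$, $\xi$ a random vector supported on $\Xi\subseteq\mathbb{R}^d$, $F(\cdot,\xi)$ convex with Lipschitz continuous gradient and $H(\cdot,\xi)$ convex (possibly nonsmooth) for every $\xi$; $f$ is convex and differentiable with $\nabla f$ Lipschitz on $X$ with constant $L_f$. $\{\tilde h_\mu\}_{\mu\in(0,\bar\mu]}$ is a smoothing function of $h$ on $X$: each $\tilde h_\mu$ is continuously differentiable and convex on $X$; $\tilde h_\mu(z)\to h(x)$ as $z\to x,\mu\downarrow0$; $|\tilde h_{\mu_2}(x)-\tilde h_{\mu_1}(x)|\le\kappa|\mu_1-\mu_2|$ for all $x\in X$, $\mu_1,\mu_2\in(0,\bar\mu]$ ($\kappa>0$); and $\nabla\tilde h_\mu$ is $L/\mu$-Lipschitz on $X$ ($L>0$). Set $\tilde\psi_\mu:=f+\tilde h_\mu$. A stochastic first-order oracle returns, for input $x\in X$, $\mu>0$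 and a sample $\xi$, a vector $\nabla\tilde\Psi_\mu(x,\xi)$. AdaSMSAG method: inputs $N\ge1$, batch sizes $m_k\ge 1$, $\alpha_k\in(0,1)$, $c>0$, $\mu_0\in(0,\bar\mu]$, $\beta_k>0$, $\theta_k>0$, $z_0=y_0\in X$. For $k=1,\dots,N$: $x_k=\alpha_k z_{k-1}+(1-\alpha_k)y_{k-1}$; $\mu_k=\frac{c\mu_0}{k+c}$; draw samples $\xi_{k,1},\dots,\xi_{k,m_k}$ and set $G_k:=\frac1{m_k}\sum_{i=1}^{m_k}\nabla\tilde\Psi_{\mu_k}(x_k,\xi_{k,i})$; $y_k=\arg\min_{y\in X}\{\langle G_k,y-x_k\rangle+\frac{\beta_k}{2}\|y-x_k\|^2\}$; $z_k=\arg\min_{x\in X}\{\langle G_k,x-x_k\rangle+\frac{\theta_k}{2}\|x-z_{k-1}\|^2\}$. Notation: $\delta_k:=G_k-\nabla\tilde\psi_{\mu_k}(x_k)$; $D_k^2:=\frac{\|x^*-z_k\|^2}{2}$ for $k\ge0$; $\Delta_{\mu_k}:=\tilde\psi_{\mu_k}(y_k)-\tilde\psi_{\mu_k}(x^* )$ for $k\ge0$; $\Gamma_k:=\Delta_{\mu_k}-(1-\alpha_k)\Delta_{\mu_{k-1}}-2\kappa(1-\alpha_k)(\mu_{k-1}-\mu_k)$. *)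

theory Defs
  imports "HOL-Analysis.Analysis"
begin

end

theory Submission
  imports Defs
begin


lemma deriv_le_aux:
  fixes g :: "real \<Rightarrow> real"
  assumes "(g has_field_derivative D) (at 0 within {0..1})"
    and "\<And>t. t \<in> {0<..1} \<Longrightarrow> g t - g 0 \<le> t * C"
  shows "D \<le> C"
proof -
  have lim: "((\<lambda>y. (g y - g 0) / (y - 0)) \<longlongrightarrow> D) (at 0 within {0..1})"
    using assms(1) by (simp add: has_field_derivative_iff)
  have nb: "at (0::real) within {0..1} \<noteq> bot"
    by (simp add: trivial_limit_within islimpt_Icc)
  have ev: "eventually (\<lambda>y. y \<in> {0<..1}) (at (0::real) within {0..1})"
    unfolding eventually_at_filter by (auto intro!: always_eventually)
  have "eventually (\<lambda>y. (g y - g 0) / (y - 0) \<le> C) (at (0::real) within {0..1})"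
    using ev by eventually_elim (use assms(2) in \<open>auto simp: divide_simps mult.commute\<close>)
  from tendsto_upperbound[OF lim this nb] show ?thesis .
qed

lemma grad_ineq:
  fixes F :: "'a::real_inner \<Rightarrow> real"
  assumes cv: "convex_on X F" and X: "convex X" and x: "x \<in> X" and u: "u \<in> X"
    and d: "(F has_derivative (\<lambda>d. g \<bullet> d)) (at x within X)"
  shows "F x + g \<bullet> (u - x) \<le> F u"
proof -
  define p where "p t = x + t *\<^sub>R (u - x)" for t :: real
  have pX: "p t \<in> X" if "t \<in> {0..1}" for t
  proof -
    have "p t = (1 - t) *\<^sub>R x + t *\<^sub>R u" by (simp add: p_def algebra_simps)
    thus ?thesis using X x u that by (auto simp: convex_alt)
  qed
  have dp: "(p has_derivative (\<lambda>t. t *\<^sub>R (u - x))) (at 0 within {0..1})"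
    unfolding p_def by (auto intro!: derivative_eq_intros)
  have "((\<lambda>t. F (p t)) has_derivative (\<lambda>t. g \<bullet> (t *\<^sub>R (u - x)))) (at 0 within {0..1})"
  proof (rule has_derivative_in_compose[OF dp])
    have "p ` {0..1} \<subseteq> X" using pX by auto
    from has_derivative_subset[OF d this] show "(F has_derivative (\<bullet>) g) (at (p 0) within p ` {0..1})"
      by (simp add: p_def)
  qed
  hence "((\<lambda>t. F (p t)) has_field_derivative (g \<bullet> (u - x))) (at 0 within {0..1})"
    unfolding has_field_derivative_def by (simp add: mult.commute[of _ "g \<bullet> (u - x)"])
  moreover have "F (p t) - F (p 0) \<le> t * (F u - F x)" if "t \<in> {0<..1}" for t
  proof -
    have "p t = (1 - t) *\<^sub>R x + t *\<^sub>R u" by (simp add: p_def algebra_simps)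
    hence "F (p t) \<le> (1 - t) * F x + t * F u"
      using convex_onD[OF cv, of t x u] that x u by auto
    thus ?thesis by (simp add: p_def algebra_simps)
  qed
  ultimately have "g \<bullet> (u - x) \<le> F u - F x" by (rule deriv_le_aux)
  thus ?thesis by simp
qed

lemma descent:
  fixes F :: "'a::real_inner \<Rightarrow> real"
  assumes X: "convex X" and x: "x \<in> X" and y: "y \<in> X"
    and d: "\<And>v. v \<in> X \<Longrightarrow> (F has_derivative (\<lambda>d. gF v \<bullet> d)) (at v within X)"
    and lip: "\<And>v w. v \<in> X \<Longrightarrow> w \<in> X \<Longrightarrow> norm (gF v - gF w) \<le> M * norm (v - w)"
  shows "F y \<le> F x + gF x \<bullet> (y - x) + M / 2 * (norm (y - x))\<^sup>2"
proof -
  define e where "e = y - x"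
  define p where "p t = x + t *\<^sub>R e" for t :: real
  have pX: "p t \<in> X" if "t \<in> {0..1}" for t
  proof -
    have "p t = (1 - t) *\<^sub>R x + t *\<^sub>R y" by (simp add: p_def e_def algebra_simps)
    thus ?thesis using X x y that by (auto simp: convex_alt)
  qed
  define hh where "hh t = F (p t) - t * (gF x \<bullet> e) - M / 2 * t\<^sup>2 * (norm e)\<^sup>2" for t
  have dh: "(hh has_derivative (\<lambda>s. s * (gF (p t) \<bullet> e - gF x \<bullet> e - M * t * (norm e)\<^sup>2)))
      (at t within {0..1})" if t: "t \<in> {0..1}" for t
  proof -
    have dp: "(p has_derivative (\<lambda>s. s *\<^sub>R e)) (at t within {0..1})"
      unfolding p_def by (auto intro!: derivative_eq_intros)
    have "((\<lambda>t. F (p t)) has_derivative (\<lambda>s. gF (p t) \<bullet> (s *\<^sub>R e))) (at t within {0..1})"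
    proof (rule has_derivative_in_compose[OF dp])
      have "p ` {0..1} \<subseteq> X" using pX by auto
      from has_derivative_subset[OF d[OF pX[OF t]] this]
      show "(F has_derivative (\<bullet>) (gF (p t))) (at (p t) within p ` {0..1})" .
    qed
    then show ?thesis unfolding hh_def
      by (auto intro!: derivative_eq_intros simp: algebra_simps power2_eq_square)
  qed
  obtain t where t: "t \<in> {0..1}" and eq: "hh 1 - hh 0 = 1 * (gF (p t) \<bullet> e - gF x \<bullet> e - M * t * (norm e)\<^sup>2)"
    using mvt_very_simple[of 0 1 hh, OF _ dh] by force
  have "gF (p t) \<bullet> e - gF x \<bullet> e = (gF (p t) - gF x) \<bullet> e" by (simp add: inner_diff_left)
  also have "\<dots> \<le> norm (gF (p t) - gF x) * norm e" by (rule norm_cauchy_schwarz)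
  also have "\<dots> \<le> M * norm (p t - x) * norm e"
    by (rule mult_right_mono[OF lip[OF pX[OF t] x]]) simp
  also have "\<dots> = M * t * (norm e)\<^sup>2" using t by (simp add: p_def power2_eq_square)
  finally have "hh 1 - hh 0 \<le> 0" using eq by simp
  thus ?thesis by (simp add: hh_def p_def e_def)
qed

lemma nonneg_lim_aux:
  fixes a b :: real
  assumes "\<And>t. t \<in> {0<..1} \<Longrightarrow> 0 \<le> a + t * b"
  shows "0 \<le> a"
proof (rule ccontr)
  assume "\<not> 0 \<le> a"
  hence a: "a < 0" by simp
  show False
  proof (cases "b \<le> 0")
    case True thus False using assms[of 1] a by auto
  next
    case False
    define t where "t = min 1 (- a / (2 * b))"
    have "t \<in> {0<..1}" using a False by (auto simp: t_def divide_neg_pos)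
    moreover have "t * b \<le> - a / 2" using False
      by (auto simp: t_def min_def field_simps)
    ultimately show False using assms[of t] a by auto
  qed
qed

lemma prox_ineq:
  fixes G :: "'a::real_inner"
  assumes X: "convex X" and z: "z \<in> X" and u: "u \<in> X" and th: "th > 0"
    and opt: "\<forall>v\<in>X. G \<bullet> (z - x) + th / 2 * (norm (z - w))\<^sup>2
          \<le> G \<bullet> (v - x) + th / 2 * (norm (v - w))\<^sup>2"
  shows "G \<bullet> (z - x) + th / 2 * (norm (z - w))\<^sup>2 + th / 2 * (norm (u - z))\<^sup>2
          \<le> G \<bullet> (u - x) + th / 2 * (norm (u - w))\<^sup>2"
proof -
  define a where "a = G \<bullet> (u - z) + th * ((z - w) \<bullet> (u - z))"
  have key: "\<And>t. G \<bullet> ((z + t *\<^sub>R (u - z)) - x) + th / 2 * (norm ((z + t *\<^sub>R (u - z)) - w))\<^sup>2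
     = G \<bullet> (z - x) + th / 2 * (norm (z - w))\<^sup>2 + t * a + t * t * (th / 2 * (norm (u - z))\<^sup>2)"
    by (simp add: a_def power2_norm_eq_inner inner_add_left inner_add_right inner_diff_left
        inner_diff_right inner_commute algebra_simps)
  have "0 \<le> a + t * (th / 2 * (norm (u - z))\<^sup>2)" if t: "t \<in> {0<..1}" for t
  proof -
    have "z + t *\<^sub>R (u - z) = (1 - t) *\<^sub>R z + t *\<^sub>R u" by (simp add: algebra_simps)
    hence "z + t *\<^sub>R (u - z) \<in> X" using X z u t by (auto simp: convex_alt)
    from opt[rule_format, OF this] key[of t]
    have "0 \<le> t * (a + t * (th / 2 * (norm (u - z))\<^sup>2))" by (simp add: algebra_simps)
    thus ?thesis using t by (simp add: zero_le_mult_iff)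
  qed
  hence a0: "0 \<le> a" by (rule nonneg_lim_aux)
  have "G \<bullet> (u - x) + th / 2 * (norm (u - w))\<^sup>2
     = G \<bullet> (z - x) + th / 2 * (norm (z - w))\<^sup>2 + a + th / 2 * (norm (u - z))\<^sup>2"
    using key[of 1] by simp
  thus ?thesis using a0 by simp
qed

theorem lemma5:
  fixes X :: "'a::euclidean_space set"
    and f h :: "'a \<Rightarrow> real" and grad_f :: "'a \<Rightarrow> 'a" and Lf :: real
    and th :: "real \<Rightarrow> 'a \<Rightarrow> real" and grad_th :: "real \<Rightarrow> 'a \<Rightarrow> 'a"
    and mubar kappa L :: real
    and Psi_grad :: "real \<Rightarrow> 'a \<Rightarrow> 'b \<Rightarrow> 'a"
    and N :: nat and m :: "nat \<Rightarrow> nat" and alpha beta theta mu :: "nat \<Rightarrow> real"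
    and c mu0 :: real and xi :: "nat \<Rightarrow> nat \<Rightarrow> 'b"
    and x y z G :: "nat \<Rightarrow> 'a" and xs :: 'a and k :: nat
  assumes X: "X \<noteq> {}" "closed X" "convex X"
    and f_convex: "convex_on X f"
    and f_grad: "\<And>u. u \<in> X \<Longrightarrow> (f has_derivative (\<lambda>d. grad_f u \<bullet> d)) (at u within X)"
    and f_Lip: "\<And>u v. u \<in> X \<Longrightarrow> v \<in> X \<Longrightarrow> norm (grad_f u - grad_f v) \<le> Lf * norm (u - v)"
    and h_convex: "convex_on X h"
    and mubar: "mubar > 0" and kappa: "kappa > 0" and L: "L > 0"
    and th_grad: "\<And>\<mu> u. \<mu> \<in> {0<..mubar} \<Longrightarrow> u \<in> X \<Longrightarrow>
        (th \<mu> has_derivative (\<lambda>d. grad_th \<mu> u \<bullet> d)) (at u within X)"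
    and th_grad_cont: "\<And>\<mu>. \<mu> \<in> {0<..mubar} \<Longrightarrow> continuous_on X (grad_th \<mu>)"
    and th_convex: "\<And>\<mu>. \<mu> \<in> {0<..mubar} \<Longrightarrow> convex_on X (th \<mu>)"
    and th_lim: "\<And>u. u \<in> X \<Longrightarrow>
        ((\<lambda>p. th (snd p) (fst p)) \<longlongrightarrow> h u) (at (u, 0) within X \<times> {0<..mubar})"
    and th_kappa: "\<And>u \<mu>1 \<mu>2. u \<in> X \<Longrightarrow> \<mu>1 \<in> {0<..mubar} \<Longrightarrow> \<mu>2 \<in> {0<..mubar} \<Longrightarrow>
        \<bar>th \<mu>2 u - th \<mu>1 u\<bar> \<le> kappa * \<bar>\<mu>1 - \<mu>2\<bar>"
    and th_Lip: "\<And>\<mu> u v. \<mu> \<in> {0<..mubar} \<Longrightarrow> u \<in> X \<Longrightarrow> v \<in> X \<Longrightarrow>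
        norm (grad_th \<mu> u - grad_th \<mu> v) \<le> (L / \<mu>) * norm (u - v)"
    and N: "N \<ge> 1" and m: "\<And>j. m j \<ge> 1"
    and alpha: "\<And>j. alpha j \<in> {0<..<1}" and c: "c > 0" and mu0: "mu0 \<in> {0<..mubar}"
    and beta: "\<And>j. beta j > 0" and theta: "\<And>j. theta j > 0"
    and z0: "z 0 = y 0" "y 0 \<in> X"
    and mu_def: "\<And>j. mu j = c * mu0 / (real j + c)"
    and x_def: "\<And>j. j \<in> {1..N} \<Longrightarrow> x j = alpha j *\<^sub>R z (j - 1) + (1 - alpha j) *\<^sub>R y (j - 1)"
    and G_def: "\<And>j. j \<in> {1..N} \<Longrightarrow>
        G j = (1 / real (m j)) *\<^sub>R (\<Sum>i\<in>{1..m j}. Psi_grad (mu j) (x j) (xi j i))"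
    and y_def: "\<And>j. j \<in> {1..N} \<Longrightarrow> y j \<in> X \<and> (\<forall>v\<in>X.
        G j \<bullet> (y j - x j) + beta j / 2 * (norm (y j - x j))\<^sup>2
          \<le> G j \<bullet> (v - x j) + beta j / 2 * (norm (v - x j))\<^sup>2)"
    and z_def: "\<And>j. j \<in> {1..N} \<Longrightarrow> z j \<in> X \<and> (\<forall>v\<in>X.
        G j \<bullet> (z j - x j) + theta j / 2 * (norm (z j - z (j - 1)))\<^sup>2
          \<le> G j \<bullet> (v - x j) + theta j / 2 * (norm (v - z (j - 1)))\<^sup>2)"
    and xs_opt: "xs \<in> X" "\<And>v. v \<in> X \<Longrightarrow> f xs + h xs \<le> f v + h v"
    and k: "1 \<le> k" "k \<le> N"
    and step1: "alpha k * beta k - theta k \<le> 0"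
    and step2: "beta k - (Lf + L / mu k) > 0"
  shows "let psi = (\<lambda>\<mu> u. f u + th \<mu> u);
             grad_psi = (\<lambda>\<mu> u. grad_f u + grad_th \<mu> u);
             delta = (\<lambda>j. G j - grad_psi (mu j) (x j));
             Dsq = (\<lambda>j. (norm (xs - z j))\<^sup>2 / 2);
             Delta = (\<lambda>j. psi (mu j) (y j) - psi (mu j) xs);
             Gamma = (\<lambda>j. Delta j - (1 - alpha j) * Delta (j - 1)
                          - 2 * kappa * (1 - alpha j) * (mu (j - 1) - mu j));
             Lk = Lf + L / mu k
         in Gamma k \<le> alpha k * theta k * (Dsq (k - 1) - Dsq k)
                     + (norm (delta k))\<^sup>2 / (2 * (beta k - Lk))
                     + alpha k * (delta k \<bullet> (xs - z (k - 1)))"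
proof -
  define a where "a = alpha k"
  define P where "P u = f u + th (mu k) u" for u
  define gP where "gP u = grad_f u + grad_th (mu k) u" for u
  define dl where "dl = G k - gP (x k)"
  define Lk where "Lk = Lf + L / mu k"
  have kN: "k \<in> {1..N}" "(k - 1) \<in> {1..N} \<or> k - 1 = 0" using k by auto
  have a: "0 < a" "a < 1" using alpha[of k] by (auto simp: a_def)
  have mupos: "\<And>j. mu j \<in> {0<..mubar}"
  proof -
    fix j
    have "mu j > 0" using c mu0 by (simp add: mu_def)
    moreover have "mu j \<le> mu0" using c mu0
      by (simp add: mu_def field_simps mult_left_mono)
    ultimately show "mu j \<in> {0<..mubar}" using mu0 by auto
  qed
  have mumono: "mu k \<le> mu (k - 1)" using c mu0 k
    by (simp add: mu_def frac_le of_nat_diff)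
  have yX: "\<And>j. j \<le> N \<Longrightarrow> y j \<in> X" using y_def z0 by (metis atLeastAtMost_iff le0 less_one not_le)
  have zX: "\<And>j. j \<le> N \<Longrightarrow> z j \<in> X" using z_def z0 by (metis atLeastAtMost_iff le0 less_one not_le)
  have yk1: "y (k - 1) \<in> X" "z (k - 1) \<in> X" "y k \<in> X" "z k \<in> X" using yX zX k by auto
  have xk: "x k = a *\<^sub>R z (k - 1) + (1 - a) *\<^sub>R y (k - 1)" using x_def kN by (simp add: a_def)
  have xX: "x k \<in> X" using xk yk1 X a by (auto simp: convex_def)
  have Pcv: "convex_on X P" unfolding P_def
    using convex_on_add[OF f_convex th_convex[OF mupos]] by simp
  have Pd: "\<And>v. v \<in> X \<Longrightarrow> (P has_derivative (\<lambda>d. gP v \<bullet> d)) (at v within X)"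
  proof -
    fix v assume v: "v \<in> X"
    show "(P has_derivative (\<lambda>d. gP v \<bullet> d)) (at v within X)"
      unfolding P_def gP_def inner_add_left
      by (rule has_derivative_add[OF f_grad[OF v] th_grad[OF mupos v]])
  qed
  have Plip: "\<And>v w. v \<in> X \<Longrightarrow> w \<in> X \<Longrightarrow> norm (gP v - gP w) \<le> Lk * norm (v - w)"
  proof -
    fix v w assume vw: "v \<in> X" "w \<in> X"
    have "norm (gP v - gP w) \<le> norm (grad_f v - grad_f w) + norm (grad_th (mu k) v - grad_th (mu k) w)"
      unfolding gP_def by (metis add_diff_add norm_triangle_ineq)
    also have "\<dots> \<le> Lf * norm (v - w) + L / mu k * norm (v - w)"
      using f_Lip[OF vw] th_Lip[OF mupos vw] by (rule add_mono)
    finally show "norm (gP v - gP w) \<le> Lk * norm (v - w)" by (simp add: Lk_def algebra_simps)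
  qed
  have bL: "beta k - Lk > 0" using step2 by (simp add: Lk_def)
  have s1: "P (y k) \<le> P (x k) + gP (x k) \<bullet> (y k - x k) + Lk / 2 * (norm (y k - x k))\<^sup>2"
    by (rule descent[OF X(3) xX yk1(3) Pd Plip])
  have s2: "- (dl \<bullet> (y k - x k)) - (beta k - Lk) / 2 * (norm (y k - x k))\<^sup>2
      \<le> (norm dl)\<^sup>2 / (2 * (beta k - Lk))"
  proof -
    define q where "q = beta k - Lk"
    define n where "n = norm (y k - x k)"
    have "- (dl \<bullet> (y k - x k)) \<le> norm dl * n"
      unfolding n_def by (metis inner_minus_left norm_cauchy_schwarz norm_minus_cancel)
    moreover have "norm dl * n \<le> (norm dl)\<^sup>2 / (2 * q) + q / 2 * n\<^sup>2"
    proof -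
      have "0 \<le> (norm dl - q * n)\<^sup>2" by simp
      hence "2 * q * (norm dl * n) \<le> (norm dl)\<^sup>2 + q\<^sup>2 * n\<^sup>2"
        by (simp add: power2_eq_square algebra_simps)
      thus ?thesis using bL unfolding q_def[symmetric]
        by (simp add: field_simps power2_eq_square)
    qed
    ultimately show ?thesis unfolding q_def n_def by simp
  qed
  have gPx: "gP (x k) = G k - dl" by (simp add: dl_def)
  have s12: "P (y k) \<le> P (x k) + (G k \<bullet> (y k - x k) + beta k / 2 * (norm (y k - x k))\<^sup>2)
      + (norm dl)\<^sup>2 / (2 * (beta k - Lk))"
  proof -
    have e1: "gP (x k) \<bullet> (y k - x k) = G k \<bullet> (y k - x k) - dl \<bullet> (y k - x k)"
      unfolding gPx by (simp add: inner_diff_left)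
    have e2: "(beta k - Lk) / 2 * (norm (y k - x k))\<^sup>2 = beta k / 2 * (norm (y k - x k))\<^sup>2 - Lk / 2 * (norm (y k - x k))\<^sup>2"
      by (simp add: field_simps)
    show ?thesis using s1 s2 e1 e2 by linarith
  qed
  define w where "w = a *\<^sub>R z k + (1 - a) *\<^sub>R y (k - 1)"
  have wX: "w \<in> X" using yk1 X a by (auto simp: convex_def w_def)
  have wx: "w - x k = a *\<^sub>R (z k - z (k - 1))" by (simp add: w_def xk algebra_simps)
  have s3a: "G k \<bullet> (y k - x k) + beta k / 2 * (norm (y k - x k))\<^sup>2
      \<le> a * (G k \<bullet> (z k - z (k - 1))) + beta k * a\<^sup>2 / 2 * (norm (z k - z (k - 1)))\<^sup>2"
    using y_def[OF kN(1)] wX wx by (auto simp: power_mult_distrib)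
  have "beta k * a\<^sup>2 / 2 * (norm (z k - z (k - 1)))\<^sup>2 \<le> a * (theta k / 2 * (norm (z k - z (k - 1)))\<^sup>2)"
  proof -
    have "a * beta k * a \<le> theta k * a" using step1 a by (simp add: a_def mult_right_mono)
    hence "beta k * a\<^sup>2 / 2 \<le> a * (theta k / 2)" by (simp add: power2_eq_square algebra_simps)
    thus ?thesis by (simp add: mult_right_mono mult.assoc[symmetric])
  qed
  hence s3: "G k \<bullet> (y k - x k) + beta k / 2 * (norm (y k - x k))\<^sup>2
      \<le> a * (G k \<bullet> (z k - z (k - 1)) + theta k / 2 * (norm (z k - z (k - 1)))\<^sup>2)"
    using s3a by (simp add: algebra_simps)
  have s4: "G k \<bullet> (z k - x k) + theta k / 2 * (norm (z k - z (k - 1)))\<^sup>2 + theta k / 2 * (norm (xs - z k))\<^sup>2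
      \<le> G k \<bullet> (xs - x k) + theta k / 2 * (norm (xs - z (k - 1)))\<^sup>2"
    using prox_ineq[OF X(3) yk1(4) xs_opt(1) theta[of k]] z_def[OF kN(1)] by blast
  have s4': "G k \<bullet> (z k - z (k - 1)) + theta k / 2 * (norm (z k - z (k - 1)))\<^sup>2
     \<le> G k \<bullet> (xs - z (k - 1)) + theta k * ((norm (xs - z (k - 1)))\<^sup>2 / 2 - (norm (xs - z k))\<^sup>2 / 2)"
    using s4 by (simp add: inner_diff_right algebra_simps)
  have decomp: "a * (gP (x k) \<bullet> (xs - z (k - 1))) = a * (gP (x k) \<bullet> (xs - x k)) + (1 - a) * (gP (x k) \<bullet> (y (k - 1) - x k))"
  proof -
    have "a *\<^sub>R (xs - z (k - 1)) = a *\<^sub>R (xs - x k) + (1 - a) *\<^sub>R (y (k - 1) - x k)"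
      by (simp add: xk algebra_simps)
    hence "gP (x k) \<bullet> (a *\<^sub>R (xs - z (k - 1))) = gP (x k) \<bullet> (a *\<^sub>R (xs - x k) + (1 - a) *\<^sub>R (y (k - 1) - x k))"
      by simp
    thus ?thesis by (simp add: inner_add_right)
  qed
  have g1: "P (x k) + gP (x k) \<bullet> (xs - x k) \<le> P xs"
    by (rule grad_ineq[OF Pcv X(3) xX xs_opt(1) Pd[OF xX]])
  have g2: "P (x k) + gP (x k) \<bullet> (y (k - 1) - x k) \<le> P (y (k - 1))"
    by (rule grad_ineq[OF Pcv X(3) xX yk1(1) Pd[OF xX]])
  have s6: "P (x k) + a * (gP (x k) \<bullet> (xs - z (k - 1))) \<le> a * P xs + (1 - a) * P (y (k - 1))"
  proof -
    have "a * (P (x k) + gP (x k) \<bullet> (xs - x k)) \<le> a * P xs" using g1 a by simp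
    moreover have "(1 - a) * (P (x k) + gP (x k) \<bullet> (y (k - 1) - x k)) \<le> (1 - a) * P (y (k - 1))"
      using g2 a by simp
    ultimately show ?thesis using decomp by (simp add: algebra_simps)
  qed
  have Gsplit: "G k \<bullet> (xs - z (k - 1)) = gP (x k) \<bullet> (xs - z (k - 1)) + dl \<bullet> (xs - z (k - 1))"
    by (simp add: dl_def inner_diff_left)
  have s7: "P (y (k - 1)) - P xs \<le> (f (y (k - 1)) + th (mu (k - 1)) (y (k - 1)) - (f xs + th (mu (k - 1)) xs))
      + 2 * kappa * (mu (k - 1) - mu k)"
    using th_kappa[OF yk1(1) mupos mupos, of "k - 1" k] th_kappa[OF xs_opt(1) mupos mupos, of "k - 1" k] mumono
    unfolding P_def by (simp add: abs_le_iff)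
  have s7': "(1 - a) * (P (y (k - 1)) - P xs) \<le> (1 - a) * ((f (y (k - 1)) + th (mu (k - 1)) (y (k - 1)) - (f xs + th (mu (k - 1)) xs))
      + 2 * kappa * (mu (k - 1) - mu k))"
    using s7 a by (simp add: mult_left_mono)
  have main: "P (y k) - P xs \<le> (1 - a) * (P (y (k - 1)) - P xs)
      + a * theta k * ((norm (xs - z (k - 1)))\<^sup>2 / 2 - (norm (xs - z k))\<^sup>2 / 2)
      + (norm dl)\<^sup>2 / (2 * (beta k - Lk)) + a * (dl \<bullet> (xs - z (k - 1)))"
  proof -
    have "a * (G k \<bullet> (z k - z (k - 1)) + theta k / 2 * (norm (z k - z (k - 1)))\<^sup>2)
       \<le> a * (G k \<bullet> (xs - z (k - 1)) + theta k * ((norm (xs - z (k - 1)))\<^sup>2 / 2 - (norm (xs - z k))\<^sup>2 / 2))"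
      using s4' a by (simp add: mult_left_mono)
    moreover have "a * (G k \<bullet> (xs - z (k - 1)) + theta k * ((norm (xs - z (k - 1)))\<^sup>2 / 2 - (norm (xs - z k))\<^sup>2 / 2))
       = a * (gP (x k) \<bullet> (xs - z (k - 1))) + a * (dl \<bullet> (xs - z (k - 1)))
         + a * theta k * ((norm (xs - z (k - 1)))\<^sup>2 / 2 - (norm (xs - z k))\<^sup>2 / 2)"
      unfolding Gsplit by (simp add: algebra_simps)
    moreover have "(1 - a) * (P (y (k - 1)) - P xs) = (1 - a) * P (y (k - 1)) - P xs + a * P xs"
      by (simp add: algebra_simps)
    ultimately show ?thesis using s12 s3 s6 by linarith
  qed
  show ?thesis
    unfolding Let_def using main s7'
    by (simp add: a_def P_def dl_def gP_def Lk_def algebra_simps)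
qed

end
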